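(* Let $\tau=k^{-7}$ and $t=\frac{1}{\tau^2}\big(3\ln(1/\tau)+\ln R\big)+\lceil 4k^2\ln k\rceil\cdot\big\lceil\frac4{\tau^2}\ln(1/\tau)\big\rceil$. Let $h(\vec y)=\mathrm{sgn}(\sum_{i\in[k]}\langle\vec w_i,\vec y_i\rangle-\theta)$ be a halfspace on $\{0,1\}^{kR}$ and let $r\in[k]$ be such that $|C_\tau(\vec w_r)|>t$. Define $\tilde h(\vec y)=\mathrm{sgn}(\sum_{i\in[k]}\langle\tilde{\vec w}_i,\vec y_i\rangle-\theta)$ where $\tilde{\vec w}_r=\mathrm{truncate}(\vec w_r,B_t(\vec w_r))$ and $\tilde{\vec w}_i=\vec w_i$ for $i\neq r$. Then for each $b\in\{0,1\}$, $$\Big|\mathbb E_{\tilde{\mathcal D}_b^R}[\tilde h(\vec y)]-\mathbb E_{\tilde{\mathcal D}_b^R}[h(\vec y)]\Big|\le\frac1{k^2}.$$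
   Context: $\mathrm{sgn}(t)=1$ if $t\ge0$, else $0$. Fix integers $k\ge2$, $R\ge1$ and any distributions $\mathcal D_0,\mathcal D_1$ on $\{0,1\}^k$. Points $\vec y\in\{0,1\}^{kR}$ are $k\times R$ matrices with rows $\vec y_i\in\{0,1\}^R$. $\tilde{\mathcal D}_b^R$: draw the $R$ columns of $\vec x$ independently from $\mathcal D_b$, then independently for each entry set $y_i^{(j)}=x_i^{(j)}$ w.p. $1-1/k^2$ and a fresh uniform bit w.p. $1/k^2$. For $\vec u\in\mathbb R^n$ order indices $i_1,\dots,i_n$ by decreasing $|u^{(i)}|$ (ties by increasing index); $B_t(\vec u)=\{i_1,\dots,i_{\min(t,n)}\}$; $\sigma_m^2=\sum_{j\ge m}|u^{(i_j)}|^2$; the $\tau$-critical index $c_\tau(\vec u)$ is the smallest $m$ with $|u^{(i_m)}|\le\tau\sigma_m$ ($+\infty$ if none); $C_\tau(\vec u)=\{i_1,\dots,i_{c_\tau(\vec u)-1}\}$ if $c_\tau<\infty$, and $[n]$ otherwise. $\mathrm{truncate}(\vec u,S)$ is the vector agreeing with $\vec u$ on coordinates in $S$ and equal to $0$ elsewhere. *)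

theory Defs
  imports "HOL-Probability.Probability"
begin

definition sgn01 :: "real \<Rightarrow> real" where
  "sgn01 t = (if t \<ge> 0 then 1 else 0)"

text \<open>Vectors u in R^n are functions nat => real, only indices < n matter.
  Index order i_1,...,i_n: decreasing |u i|, ties by increasing index
  (sort_key is a stable sort, applied to [0..<n]). Here 0-indexed list.\<close>
definition idx_order :: "nat \<Rightarrow> (nat \<Rightarrow> real) \<Rightarrow> nat list" where
  "idx_order n u = sort_key (\<lambda>i. - \<bar>u i\<bar>) [0..<n]"

definition Bset :: "nat \<Rightarrow> nat \<Rightarrow> (nat \<Rightarrow> real) \<Rightarrow> nat set" where
  "Bset t n u = set (take t (idx_order n u))"

text \<open>sigma_m (1-indexed m): sqrt of sum_{j >= m} |u(i_j)|^2\<close>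
definition sigma_m :: "nat \<Rightarrow> (nat \<Rightarrow> real) \<Rightarrow> nat \<Rightarrow> real" where
  "sigma_m n u m = sqrt (\<Sum>j\<in>{m - 1..<n}. (u (idx_order n u ! j))\<^sup>2)"

definition crit_cond :: "real \<Rightarrow> nat \<Rightarrow> (nat \<Rightarrow> real) \<Rightarrow> nat \<Rightarrow> bool" where
  "crit_cond \<tau> n u m \<longleftrightarrow> m \<in> {1..n} \<and> \<bar>u (idx_order n u ! (m - 1))\<bar> \<le> \<tau> * sigma_m n u m"

definition Cset :: "real \<Rightarrow> nat \<Rightarrow> (nat \<Rightarrow> real) \<Rightarrow> nat set" where
  "Cset \<tau> n u = (if \<exists>m. crit_cond \<tau> n u m
      then set (take ((LEAST m. crit_cond \<tau> n u m) - 1) (idx_order n u))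
      else {..<n})"

definition truncate :: "(nat \<Rightarrow> real) \<Rightarrow> nat set \<Rightarrow> (nat \<Rightarrow> real)" where
  "truncate u S = (\<lambda>i. if i \<in> S then u i else 0)"

definition noise_bit :: "nat \<Rightarrow> bool \<Rightarrow> bool pmf" where
  "noise_bit k b = do { flip \<leftarrow> bernoulli_pmf (1 / (real k)\<^sup>2);
                        if flip then bernoulli_pmf (1/2) else return_pmf b }"

text \<open>Noisy distribution tilde D^R: y i j is row i (< k), column j (< R).
  Columns x^(j) (a function nat => bool, coordinates < k) drawn i.i.d. from D.\<close>
definition noisyD :: "nat \<Rightarrow> nat \<Rightarrow> (nat \<Rightarrow> bool) pmf \<Rightarrow> (nat \<Rightarrow> nat \<Rightarrow> bool) pmf" where
  "noisyD k R D = do {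
     X \<leftarrow> Pi_pmf {..<R} (\<lambda>_. False) (\<lambda>_. D);
     Y \<leftarrow> Pi_pmf ({..<k} \<times> {..<R}) False (\<lambda>(i,j). noise_bit k (X j i));
     return_pmf (\<lambda>i j. Y (i, j)) }"

definition halfspace :: "nat \<Rightarrow> nat \<Rightarrow> (nat \<Rightarrow> nat \<Rightarrow> real) \<Rightarrow> real \<Rightarrow> (nat \<Rightarrow> nat \<Rightarrow> bool) \<Rightarrow> real" where
  "halfspace k R w \<theta> y = sgn01 ((\<Sum>i<k. \<Sum>j<R. w i j * (if y i j then 1 else 0)) - \<theta>)"

definition tau_k :: "nat \<Rightarrow> real" where
  "tau_k k = 1 / (real k) ^ 7"

definition t_param :: "nat \<Rightarrow> nat \<Rightarrow> real" where
  "t_param k R = (1 / (tau_k k)\<^sup>2) * (3 * ln (1 / tau_k k) + ln (real R))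
     + real_of_int (\<lceil>4 * (real k)\<^sup>2 * ln (real k)\<rceil>) * real_of_int (\<lceil>(4 / (tau_k k)\<^sup>2) * ln (1 / tau_k k)\<rceil>)"

end

theory Submission
  imports Defs
begin


lemma bind_bound:
  fixes N :: "'a \<Rightarrow> 'b pmf"
  assumes "\<And>x. x \<in> set_pmf M \<Longrightarrow> measure (N x) X \<le> c" "c \<ge> 0"
  shows "measure (bind_pmf M N) X \<le> c"
proof -
  have "emeasure (bind_pmf M N) X = (\<integral>\<^sup>+x. emeasure (N x) X \<partial>M)" by simp
  also have "\<dots> \<le> (\<integral>\<^sup>+x. ennreal c \<partial>M)"
    apply (rule nn_integral_mono_AE)
    apply (rule AE_pmfI)
    using assms by (simp add: measure_pmf.emeasure_eq_measure)
  also have "\<dots> = ennreal c" by (simp add: measure_pmf.emeasure_space_1)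
  finally show ?thesis using assms(2)
    by (simp add: measure_pmf.emeasure_eq_measure)
qed

lemma unique_measure_bound:
  fixes P :: "'a \<Rightarrow> bool pmf"
  assumes fin: "finite I" and LI: "L \<subseteq> I" and c0: "c \<ge> 0"
    and pc: "\<And>l v. l \<in> L \<Longrightarrow> pmf (P l) v \<le> c"
    and uniq: "\<And>Y1 Y2. Y1 \<in> E \<Longrightarrow> Y2 \<in> E \<Longrightarrow> (\<forall>i. i \<notin> L \<longrightarrow> Y1 i = Y2 i) \<Longrightarrow> (\<forall>i\<in>L. Y1 i = Y2 i)"
  shows "measure (Pi_pmf I d P) E \<le> c ^ card L"
proof -
  have finL: "finite L" using fin LI finite_subset by blast
  have IU: "I = (I - L) \<union> L" using LI by blast
  let ?h = "(\<lambda>(f,g) x. if x \<in> I - L then f x else g x) :: ('a \<Rightarrow> bool) \<times> ('a \<Rightarrow> bool) \<Rightarrow> 'a \<Rightarrow> bool"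
  have "Pi_pmf I d P = map_pmf ?h (pair_pmf (Pi_pmf (I - L) d P) (Pi_pmf L d P))"
    by (subst IU, rule Pi_pmf_union) (use fin finL in auto)
  hence "measure (Pi_pmf I d P) E = measure (pair_pmf (Pi_pmf (I - L) d P) (Pi_pmf L d P)) (?h -` E)"
    by simp
  also have "\<dots> \<le> c ^ card L"
    unfolding pair_pmf_def
  proof (rule bind_bound)
    fix f assume f: "f \<in> set_pmf (Pi_pmf (I - L) d P)"
    have eq: "bind_pmf (Pi_pmf L d P) (\<lambda>b. return_pmf (f, b)) = map_pmf (Pair f) (Pi_pmf L d P)"
      by (simp add: map_pmf_def)
    let ?S = "{g. (f, g) \<in> ?h -` E} \<inter> set_pmf (Pi_pmf L d P)"
    have "measure (Pi_pmf L d P) (Pair f -` (?h -` E)) = measure (Pi_pmf L d P) ?S"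
      by (subst measure_Int_set_pmf) (simp add: vimage_def)
    also have "\<dots> \<le> c ^ card L"
    proof (cases "?S = {}")
      case True then show ?thesis using c0 by simp
    next
      case False
      then obtain g0 where g0: "g0 \<in> ?S" by blast
      have "?S \<subseteq> {g0}"
      proof
        fix g assume g: "g \<in> ?S"
        have sg: "\<forall>x. x \<notin> L \<longrightarrow> g x = d" "\<forall>x. x \<notin> L \<longrightarrow> g0 x = d"
          using g g0 set_Pi_pmf_subset[OF finL, of d P] by blast+
        have "\<forall>i\<in>L. ?h (f,g) i = ?h (f,g0) i"
          apply (rule uniq) using g g0 sg by auto
        hence "g = g0" using sg LI by (auto simp: fun_eq_iff)
        thus "g \<in> {g0}" by simp
      qed
      hence "measure (Pi_pmf L d P) ?S \<le> measure (Pi_pmf L d P) {g0}"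
        by (intro measure_pmf.finite_measure_mono) auto
      also have "\<dots> = pmf (Pi_pmf L d P) g0" by (simp add: measure_pmf_single)
      also have "\<dots> \<le> (\<Prod>x\<in>L. pmf (P x) (g0 x))"
        by (subst pmf_Pi[OF finL]) (auto intro: prod_nonneg)
      also have "\<dots> \<le> (\<Prod>x\<in>L. c)"
        by (intro prod_mono) (auto simp: pc)
      finally show ?thesis by simp
    qed
    finally show "measure (bind_pmf (Pi_pmf L d P) (\<lambda>b. return_pmf (f, b))) (?h -` E) \<le> c ^ card L"
      by (simp add: eq)
  qed (use c0 in simp)
  finally show ?thesis .
qed

lemma noise_bit_pmf:
  assumes "k \<ge> 1"
  shows "pmf (noise_bit k b) v \<le> 1 - 1 / (2 * (real k)\<^sup>2)"
proof -
  have q: "0 \<le> 1 / (real k)\<^sup>2" "1 / (real k)\<^sup>2 \<le> 1" using assms by auto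
  have "pmf (noise_bit k b) v = (1/2) * (1 / (real k)\<^sup>2) + (if v = b then 1 else 0) * (1 - 1 / (real k)\<^sup>2)"
    unfolding noise_bit_def pmf_bind using q by (simp add: indicator_def)
  also have "\<dots> \<le> (1/2) * (1 / (real k)\<^sup>2) + 1 * (1 - 1 / (real k)\<^sup>2)"
    using q by (intro add_left_mono mult_right_mono) auto
  finally show ?thesis by simp
qed

lemma exp_diff_bound:
  fixes f g :: "'a \<Rightarrow> real"
  assumes "\<And>x. f x \<in> {0,1}" "\<And>x. g x \<in> {0,1}"
  shows "\<bar>measure_pmf.expectation p f - measure_pmf.expectation p g\<bar> \<le> measure p {x. f x \<noteq> g x}"
proof -
  have intf: "integrable (measure_pmf p) f" 
    proof (rule measure_pmf.integrable_const_bound[of _ 1])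
    show "AE x in measure_pmf p. norm (f x) \<le> 1"
      by (rule AE_pmfI) (use assms(1) in \<open>metis insert_iff singletonD norm_one norm_zero order_refl zero_le_one\<close>)
  qed simp
  have intg: "integrable (measure_pmf p) g" 
    proof (rule measure_pmf.integrable_const_bound[of _ 1])
    show "AE x in measure_pmf p. norm (g x) \<le> 1"
      by (rule AE_pmfI) (use assms(2) in \<open>metis insert_iff singletonD norm_one norm_zero order_refl zero_le_one\<close>)
  qed simp
  have "\<bar>measure_pmf.expectation p f - measure_pmf.expectation p g\<bar> = \<bar>measure_pmf.expectation p (\<lambda>x. f x - g x)\<bar>"
    using intf intg by simp
  also have "\<dots> \<le> measure_pmf.expectation p (\<lambda>x. \<bar>f x - g x\<bar>)"
    by (rule integral_abs_bound)
  also have "(\<lambda>x. \<bar>f x - g x\<bar>) = indicator {x. f x \<noteq> g x}"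
  proof
    fix x show "\<bar>f x - g x\<bar> = indicator {x. f x \<noteq> g x} x"
      using assms[of x] by (auto simp: indicator_def)
  qed
  also have "measure_pmf.expectation p (indicator {x. f x \<noteq> g x}) = measure p {x. f x \<noteq> g x}"
    by simp
  finally show ?thesis .
qed



lemma superdec:
  fixes a \<delta> :: "nat \<Rightarrow> real"
  assumes big: "\<And>j. j < M \<Longrightarrow> (\<Sum>l\<in>{j<..<M}. \<bar>a l\<bar>) + D < \<bar>a j\<bar>"
    and dl: "\<And>j. j < M \<Longrightarrow> \<delta> j \<in> {-1,0,1}"
    and sm: "\<bar>\<Sum>j<M. a j * \<delta> j\<bar> \<le> D"
  shows "\<forall>j<M. \<delta> j = 0"
proof (rule ccontr)
  assume "\<not> (\<forall>j<M. \<delta> j = 0)"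
  then obtain j1 where "j1 < M" "\<delta> j1 \<noteq> 0" by blast
  define j0 where "j0 = (LEAST j. j < M \<and> \<delta> j \<noteq> 0)"
  have j0: "j0 < M" "\<delta> j0 \<noteq> 0" using LeastI[of "\<lambda>j. j < M \<and> \<delta> j \<noteq> 0" j1] \<open>j1 < M\<close> \<open>\<delta> j1 \<noteq> 0\<close>
    unfolding j0_def by auto
  have before: "\<And>j. j < j0 \<Longrightarrow> \<delta> j = 0"
  proof -
    fix j assume jj: "j < j0"
    have "\<not> (j < M \<and> \<delta> j \<noteq> 0)" using jj unfolding j0_def by (rule not_less_Least)
    thus "\<delta> j = 0" using jj j0(1) by auto
  qed
  have abs1: "\<bar>\<delta> j0\<bar> = 1" using dl[OF j0(1)] j0(2) by auto
  have split: "{..<M} = {..<j0} \<union> insert j0 {j0<..<M}" using j0 by auto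
  have "(\<Sum>j<M. a j * \<delta> j) = (\<Sum>j<j0. a j * \<delta> j) + (a j0 * \<delta> j0 + (\<Sum>j\<in>{j0<..<M}. a j * \<delta> j))"
    by (subst split, subst sum.union_disjoint) auto
  also have "(\<Sum>j<j0. a j * \<delta> j) = 0" using before by simp
  finally have eq: "(\<Sum>j<M. a j * \<delta> j) = a j0 * \<delta> j0 + (\<Sum>j\<in>{j0<..<M}. a j * \<delta> j)" by simp
  have "\<bar>\<Sum>j\<in>{j0<..<M}. a j * \<delta> j\<bar> \<le> (\<Sum>j\<in>{j0<..<M}. \<bar>a j * \<delta> j\<bar>)" by (rule sum_abs)
  also have "\<dots> \<le> (\<Sum>j\<in>{j0<..<M}. \<bar>a j\<bar>)"
  proof (rule sum_mono)
    fix j assume "j \<in> {j0<..<M}"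
    hence "\<bar>\<delta> j\<bar> \<le> 1" using dl[of j] by auto
    thus "\<bar>a j * \<delta> j\<bar> \<le> \<bar>a j\<bar>" by (simp add: abs_mult mult_left_le)
  qed
  finally have r: "\<bar>\<Sum>j\<in>{j0<..<M}. a j * \<delta> j\<bar> \<le> (\<Sum>j\<in>{j0<..<M}. \<bar>a j\<bar>)" .
  have "\<bar>a j0 * \<delta> j0\<bar> = \<bar>a j0\<bar>" using abs1 by (simp add: abs_mult)
  hence "\<bar>\<Sum>j<M. a j * \<delta> j\<bar> \<ge> \<bar>a j0\<bar> - (\<Sum>j\<in>{j0<..<M}. \<bar>a j\<bar>)"
    using eq r by linarith
  with big[OF j0(1)] sm show False by linarith
qed



lemma crit_facts:
  assumes "real (card (Cset \<tau> n u)) > t" "t \<ge> 0"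
  shows "nat \<lceil>t\<rceil> \<le> n \<and> (\<forall>m<nat \<lceil>t\<rceil>. \<bar>u (idx_order n u ! m)\<bar> > \<tau> * sqrt (\<Sum>j\<in>{m..<n}. (u (idx_order n u ! j))\<^sup>2))"
proof -
  have len: "length (idx_order n u) = n" and dist: "distinct (idx_order n u)"
    by (auto simp: idx_order_def)
  show ?thesis
  proof (cases "\<exists>m. crit_cond \<tau> n u m")
    case True
    define c where "c = (LEAST m. crit_cond \<tau> n u m)"
    have cc: "crit_cond \<tau> n u c" unfolding c_def using True by (metis LeastI)
    hence cn: "c \<in> {1..n}" by (simp add: crit_cond_def)
    have "Cset \<tau> n u = set (take (c - 1) (idx_order n u))" using True by (simp add: Cset_def c_def)
    hence "card (Cset \<tau> n u) = c - 1" using dist len cn by (auto simp: distinct_card min_def)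
    hence tc: "t < real (c - 1)" using assms(1) by simp
    hence T: "nat \<lceil>t\<rceil> \<le> c - 1" by simp
    have "\<forall>m<nat \<lceil>t\<rceil>. \<bar>u (idx_order n u ! m)\<bar> > \<tau> * sqrt (\<Sum>j\<in>{m..<n}. (u (idx_order n u ! j))\<^sup>2)"
    proof (intro allI impI)
      fix m assume m: "m < nat \<lceil>t\<rceil>"
      have "\<not> crit_cond \<tau> n u (m+1)" using not_less_Least[of "m+1" "crit_cond \<tau> n u"] m T
        unfolding c_def[symmetric] by linarith
      moreover have "m + 1 \<in> {1..n}" using m T cn by (auto simp del: nat_ceiling_le_eq)
      ultimately show "\<bar>u (idx_order n u ! m)\<bar> > \<tau> * sqrt (\<Sum>j\<in>{m..<n}. (u (idx_order n u ! j))\<^sup>2)"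
        by (simp add: crit_cond_def sigma_m_def)
    qed
    thus ?thesis using T cn by auto
  next
    case False
    hence "Cset \<tau> n u = {..<n}" by (simp add: Cset_def)
    hence tn: "t < real n" using assms(1) by simp
    hence T: "nat \<lceil>t\<rceil> \<le> n" by simp
    have "\<forall>m<nat \<lceil>t\<rceil>. \<bar>u (idx_order n u ! m)\<bar> > \<tau> * sqrt (\<Sum>j\<in>{m..<n}. (u (idx_order n u ! j))\<^sup>2)"
    proof (intro allI impI)
      fix m assume m: "m < nat \<lceil>t\<rceil>"
      have "\<not> crit_cond \<tau> n u (m+1)" using False by blast
      moreover have "m + 1 \<in> {1..n}" using m T by (auto simp del: nat_ceiling_le_eq)
      ultimately show "\<bar>u (idx_order n u ! m)\<bar> > \<tau> * sqrt (\<Sum>j\<in>{m..<n}. (u (idx_order n u ! j))\<^sup>2)"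
        by (simp add: crit_cond_def sigma_m_def)
    qed
    thus ?thesis using T by auto
  qed
qed



lemma decay:
  fixes a :: "nat \<Rightarrow> real"
  assumes big: "\<And>m. m < T \<Longrightarrow> \<bar>a m\<bar> > \<tau> * sqrt (\<Sum>j\<in>{m..<R}. (a j)\<^sup>2)"
    and TR: "T \<le> R" and t0: "0 \<le> \<tau>" "\<tau> \<le> 1"
  shows "m + n \<le> T \<Longrightarrow> (\<Sum>j\<in>{m+n..<R}. (a j)\<^sup>2) \<le> (1 - \<tau>\<^sup>2) ^ n * (\<Sum>j\<in>{m..<R}. (a j)\<^sup>2)"
proof (induction n)
  case 0 then show ?case by simp
next
  case (Suc n)
  let ?s = "\<lambda>q. (\<Sum>j\<in>{q..<R}. (a j)\<^sup>2)"
  define q where "q = m + n"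
  have qT: "q < T" using Suc.prems q_def by simp
  have s0: "?s q \<ge> 0" by (intro sum_nonneg) auto
  have step: "?s q = (a q)\<^sup>2 + ?s (Suc q)"
    using qT TR by (subst sum.atLeast_Suc_lessThan) auto
  have "\<bar>a q\<bar> > \<tau> * sqrt (?s q)" using big[OF qT] .
  moreover have "\<tau> * sqrt (?s q) \<ge> 0" using t0 s0 by simp
  ultimately have "(\<tau> * sqrt (?s q))\<^sup>2 \<le> (\<bar>a q\<bar>)\<^sup>2"
    by (intro power_mono) auto
  hence "\<tau>\<^sup>2 * ?s q \<le> (a q)\<^sup>2" using s0 by (simp add: power_mult_distrib)
  hence s1: "?s (Suc q) \<le> (1 - \<tau>\<^sup>2) * ?s q" using step by (simp add: algebra_simps)
  have t2: "0 \<le> 1 - \<tau>\<^sup>2" using t0 by (simp add: power_le_one)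
  have "?s (m + Suc n) = ?s (Suc q)" by (simp add: q_def)
  also have "\<dots> \<le> (1 - \<tau>\<^sup>2) * ?s q" by (rule s1)
  also have "\<dots> \<le> (1 - \<tau>\<^sup>2) * ((1 - \<tau>\<^sup>2) ^ n * ?s m)"
    using Suc.IH Suc.prems t2 unfolding q_def by (intro mult_left_mono) auto
  finally show ?case by simp
qed





lemma uniq_core:
  fixes w :: "nat \<Rightarrow> nat \<Rightarrow> real" and ord :: "nat list" and Y1 Y2 :: "nat \<times> nat \<Rightarrow> bool"
  assumes rk: "r < k" and dist: "distinct ord" and so: "set ord = {..<R}" and len: "length ord = R"
    and TR: "T \<le> R" and Lb0: "0 < Lb" and pos: "\<And>j. j < M \<Longrightarrow> j * Lb < T"
    and big: "\<And>j. j < M \<Longrightarrow> (\<Sum>l\<in>{j<..<M}. \<bar>w r (ord!(l*Lb))\<bar>) + 2 * (\<Sum>m\<in>{T..<R}. \<bar>w r (ord!m)\<bar>) < \<bar>w r (ord!(j*Lb))\<bar>"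
    and d1: "halfspace k R (w(r := truncate (w r) (set (take T ord)))) \<theta> (\<lambda>i j. Y1 (i,j)) \<noteq> halfspace k R w \<theta> (\<lambda>i j. Y1 (i,j))"
    and d2: "halfspace k R (w(r := truncate (w r) (set (take T ord)))) \<theta> (\<lambda>i j. Y2 (i,j)) \<noteq> halfspace k R w \<theta> (\<lambda>i j. Y2 (i,j))"
    and agree: "\<forall>i. i \<notin> (\<lambda>j. (r, ord!(j*Lb))) ` {..<M} \<longrightarrow> Y1 i = Y2 i"
  shows "\<forall>i\<in>(\<lambda>j. (r, ord!(j*Lb))) ` {..<M}. Y1 i = Y2 i"
proof -
  define B where "B = set (take T ord)"
  define w' where "w' = w(r := truncate (w r) B)"
  define ind where "ind Y i j = (if Y (i,j) then 1 else 0 :: real)" for Y :: "nat \<times> nat \<Rightarrow> bool" and i j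
  define F where "F Y = (\<Sum>i<k. \<Sum>j<R. w' i j * ind Y i j)" for Y
  define G where "G Y = (\<Sum>i<k. \<Sum>j<R. w i j * ind Y i j)" for Y
  define \<Delta> where "\<Delta> = (\<Sum>m\<in>{T..<R}. \<bar>w r (ord!m)\<bar>)"
  define L where "L = (\<lambda>j. (r, ord!(j*Lb))) ` {..<M}"
  have injR: "inj_on (nth ord) {..<R}" using dist len by (intro inj_on_nth) auto
  have imB: "nth ord ` {..<T} = B" unfolding B_def using nth_image[of T ord] TR len
    by (simp add: atLeast0LessThan)
  have setord: "set ord = nth ord ` {..<R}" using nth_image[of R ord] len by (simp add: atLeast0LessThan)
  have Bsub: "B \<subseteq> set ord" unfolding B_def by (meson set_take_subset)
  have reidx: "(\<Sum>j\<in>set ord - B. \<bar>w r j\<bar>) = \<Delta>"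
  proof -
    have d: "nth ord ` ({..<R} - {..<T}) = nth ord ` {..<R} - nth ord ` {..<T}"
      by (rule inj_on_image_set_diff[OF injR]) (use TR in auto)
    have d2: "{..<R} - {..<T} = {T..<R}" by auto
    have e: "set ord - B = nth ord ` {T..<R}"
      using d unfolding d2 setord[symmetric] imB by (rule sym)
    have i2: "inj_on (nth ord) {T..<R}" using injR by (rule inj_on_subset) auto
    show ?thesis unfolding e \<Delta>_def using sum.reindex[OF i2, of "\<lambda>j. \<bar>w r j\<bar>"] by (simp only: comp_def)
  qed
  have tail: "G Y - F Y = (\<Sum>j\<in>set ord - B. w r j * ind Y r j)" for Y
  proof -
    have "G Y - F Y = (\<Sum>i<k. \<Sum>j<R. (w i j - w' i j) * ind Y i j)"
      unfolding F_def G_def by (simp add: left_diff_distrib sum_subtractf)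
    also have "\<dots> = (\<Sum>j<R. (w r j - w' r j) * ind Y r j)"
    proof -
      have "(\<Sum>i<k. \<Sum>j<R. (w i j - w' i j) * ind Y i j) = (\<Sum>i\<in>{r}. \<Sum>j<R. (w i j - w' i j) * ind Y i j)"
        by (rule sum.mono_neutral_right) (auto simp: rk w'_def)
      thus ?thesis by simp
    qed
    also have "\<dots> = (\<Sum>j<R. if j \<notin> B then w r j * ind Y r j else 0)"
      by (intro sum.cong) (auto simp: w'_def truncate_def)
    also have "\<dots> = (\<Sum>j\<in>{j\<in>{..<R}. j \<notin> B}. w r j * ind Y r j)"
      by (rule sum.inter_filter[symmetric]) simp
    also have "{j\<in>{..<R}. j \<notin> B} = set ord - B" using so by auto
    finally show ?thesis .
  qed
  have tailb: "\<bar>G Y - F Y\<bar> \<le> \<Delta>" for Y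
  proof -
    have "\<bar>G Y - F Y\<bar> \<le> (\<Sum>j\<in>set ord - B. \<bar>w r j * ind Y r j\<bar>)"
      unfolding tail by (rule sum_abs)
    also have "\<dots> \<le> (\<Sum>j\<in>set ord - B. \<bar>w r j\<bar>)"
      by (intro sum_mono) (auto simp: ind_def abs_mult)
    finally show ?thesis using reidx by simp
  qed
  have win: "\<bar>F Y - \<theta>\<bar> \<le> \<Delta>"
    if "halfspace k R w' \<theta> (\<lambda>i j. Y (i,j)) \<noteq> halfspace k R w \<theta> (\<lambda>i j. Y (i,j))" for Y
  proof -
    have "sgn01 (F Y - \<theta>) \<noteq> sgn01 (G Y - \<theta>)"
      using that by (simp add: halfspace_def F_def G_def ind_def)
    hence "(F Y - \<theta> \<ge> 0) \<noteq> (G Y - \<theta> \<ge> 0)" by (auto simp: sgn01_def split: if_splits)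
    thus ?thesis using tailb[of Y] by linarith
  qed
  have w1: "\<bar>F Y1 - \<theta>\<bar> \<le> \<Delta>" using d1 by (intro win) (simp add: w'_def B_def)
  have w2: "\<bar>F Y2 - \<theta>\<bar> \<le> \<Delta>" using d2 by (intro win) (simp add: w'_def B_def)
  define \<delta> where "\<delta> j = ind Y1 r (ord!(j*Lb)) - ind Y2 r (ord!(j*Lb))" for j
  have posR: "j * Lb < R" if "j < M" for j using pos[OF that] TR by simp
  have LI: "L \<subseteq> {..<k} \<times> {..<R}"
  proof
    fix x assume "x \<in> L"
    then obtain j where j: "j < M" and x: "x = (r, ord!(j*Lb))" unfolding L_def by blast
    have "ord!(j*Lb) \<in> set ord" using posR[OF j] len by (intro nth_mem) simp
    hence "ord!(j*Lb) < R" using so by blast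
    thus "x \<in> {..<k} \<times> {..<R}" using x rk by simp
  qed
  have injL: "inj_on (\<lambda>j. (r, ord!(j*Lb))) {..<M}"
  proof (rule inj_onI)
    fix x y assume x: "x \<in> {..<M}" and y: "y \<in> {..<M}" and e: "(r, ord!(x*Lb)) = (r, ord!(y*Lb))"
    have "x * Lb = y * Lb" using e posR[of x] posR[of y] x y dist len by (simp add: nth_eq_iff_index_eq)
    thus "x = y" using Lb0 by simp
  qed
  have "F Y1 - F Y2 = (\<Sum>i<k. \<Sum>j<R. w' i j * (ind Y1 i j - ind Y2 i j))"
    unfolding F_def by (simp add: right_diff_distrib sum_subtractf)
  also have "\<dots> = (\<Sum>x\<in>{..<k} \<times> {..<R}. w' (fst x) (snd x) * (ind Y1 (fst x) (snd x) - ind Y2 (fst x) (snd x)))"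
    by (simp add: sum.cartesian_product case_prod_unfold)
  also have "\<dots> = (\<Sum>x\<in>L. w' (fst x) (snd x) * (ind Y1 (fst x) (snd x) - ind Y2 (fst x) (snd x)))"
  proof (rule sum.mono_neutral_right)
    show "\<forall>x\<in>{..<k} \<times> {..<R} - L. w' (fst x) (snd x) * (ind Y1 (fst x) (snd x) - ind Y2 (fst x) (snd x)) = 0"
    proof
      fix x assume "x \<in> {..<k} \<times> {..<R} - L"
      hence "Y1 x = Y2 x" using agree unfolding L_def by blast
      thus "w' (fst x) (snd x) * (ind Y1 (fst x) (snd x) - ind Y2 (fst x) (snd x)) = 0"
        by (simp add: ind_def)
    qed
  qed (use LI in auto)
  also have "\<dots> = (\<Sum>j<M. w' r (ord!(j*Lb)) * \<delta> j)"
    unfolding L_def by (subst sum.reindex[OF injL]) (simp add: \<delta>_def ind_def)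
  also have "\<dots> = (\<Sum>j<M. w r (ord!(j*Lb)) * \<delta> j)"
  proof (rule sum.cong)
    fix j assume j: "j \<in> {..<M}"
    have jT: "j*Lb < T" using pos[of j] j by simp
    have lt: "length (take T ord) = T" using len TR by simp
    have "take T ord ! (j*Lb) \<in> set (take T ord)" using jT lt by (intro nth_mem) simp
    moreover have "take T ord ! (j*Lb) = ord ! (j*Lb)" using jT by (rule nth_take)
    ultimately have "ord!(j*Lb) \<in> B" unfolding B_def by simp
    thus "w' r (ord!(j*Lb)) * \<delta> j = w r (ord!(j*Lb)) * \<delta> j" by (simp add: w'_def truncate_def)
  qed simp
  finally have diff: "F Y1 - F Y2 = (\<Sum>j<M. w r (ord!(j*Lb)) * \<delta> j)" .
  have "\<bar>\<Sum>j<M. w r (ord!(j*Lb)) * \<delta> j\<bar> \<le> 2 * \<Delta>" using diff w1 w2 by linarith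
  have "\<forall>j<M. \<delta> j = 0"
  proof (rule superdec[where a = "\<lambda>j. w r (ord!(j*Lb))" and D = "2 * \<Delta>"])
    show "\<And>j. j < M \<Longrightarrow> (\<Sum>l\<in>{j<..<M}. \<bar>w r (ord!(l*Lb))\<bar>) + 2 * \<Delta> < \<bar>w r (ord!(j*Lb))\<bar>"
      using big unfolding \<Delta>_def by blast
    show "\<And>j. j < M \<Longrightarrow> \<delta> j \<in> {-1,0,1}" by (auto simp: \<delta>_def ind_def)
    show "\<bar>\<Sum>j<M. w r (ord!(j*Lb)) * \<delta> j\<bar> \<le> 2 * \<Delta>" by fact
  qed
  show ?thesis
  proof
    fix x assume "x \<in> (\<lambda>j. (r, ord!(j*Lb))) ` {..<M}"
    then obtain j where j: "j < M" and x: "x = (r, ord!(j*Lb))" by blast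
    have "\<delta> j = 0" using \<open>\<forall>j<M. \<delta> j = 0\<close> j by blast
    hence "ind Y1 r (ord!(j*Lb)) = ind Y2 r (ord!(j*Lb))" unfolding \<delta>_def by simp
    thus "Y1 x = Y2 x" unfolding x ind_def by (cases "Y1 (r, ord!(j*Lb))"; cases "Y2 (r, ord!(j*Lb))") simp_all
  qed
qed



lemma analytic:
  fixes a :: "nat \<Rightarrow> real" and \<tau> :: real
  assumes bigc: "\<And>m. m < T \<Longrightarrow> \<bar>a m\<bar> > \<tau> * sqrt (\<Sum>j\<in>{m..<R}. (a j)\<^sup>2)"
    and TR: "T \<le> R" and t0: "0 < \<tau>" and t16: "\<tau> \<le> 1/16" and Mt: "real M * \<tau> \<le> 1/2"
    and dec: "(1 - \<tau>\<^sup>2) ^ Lb \<le> \<tau> ^ 4"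
    and pos: "\<And>j. j < M \<Longrightarrow> j * Lb < T"
    and tailp: "\<And>j. j < M \<Longrightarrow> real R * (1 - \<tau>\<^sup>2) ^ (T - j * Lb) \<le> \<tau> ^ 3"
    and j: "j < M"
  shows "(\<Sum>l\<in>{j<..<M}. \<bar>a (l*Lb)\<bar>) + 2 * (\<Sum>m\<in>{T..<R}. \<bar>a m\<bar>) < \<bar>a (j*Lb)\<bar>"
proof -
  define s where "s q = (\<Sum>i\<in>{q..<R}. (a i)\<^sup>2)" for q
  define S where "S = s (j*Lb)"
  have s0: "s q \<ge> 0" for q unfolding s_def by (intro sum_nonneg) auto
  have S0: "S \<ge> 0" unfolding S_def by (rule s0)
  have t1: "\<tau> \<le> 1" using t16 by simp
  have dk: "m + n \<le> T \<Longrightarrow> s (m+n) \<le> (1 - \<tau>\<^sup>2) ^ n * s m" for m n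
    unfolding s_def by (rule decay[OF bigc TR less_imp_le[OF t0] t1])
  have anti: "q \<le> q' \<Longrightarrow> s q' \<le> s q" for q q'
    unfolding s_def by (intro sum_mono2) auto
  have jT: "j * Lb < T" using pos[OF j] .
  have lead: "\<bar>a (l*Lb)\<bar> \<le> \<tau>\<^sup>2 * sqrt S" if l: "l \<in> {j<..<M}" for l
  proof -
    have lM: "l < M" and jl: "j < l" using l by auto
    have lR: "l * Lb < R" using pos[OF lM] TR by simp
    have "(a (l*Lb))\<^sup>2 \<le> s (l*Lb)" unfolding s_def
      using lR by (intro member_le_sum) auto
    also have "\<dots> \<le> s (j*Lb + Lb)" proof (rule anti)
      have "Suc j * Lb \<le> l * Lb" using jl by (intro mult_le_mono1) simp
      thus "j * Lb + Lb \<le> l * Lb" by simp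
    qed
    also have "\<dots> \<le> (1 - \<tau>\<^sup>2) ^ Lb * S" unfolding S_def
    proof (rule dk)
      have "Suc j < M" using jl lM by simp
      from pos[OF this] show "j * Lb + Lb \<le> T" by simp
    qed
    also have "\<dots> \<le> \<tau> ^ 4 * S" using dec S0 by (rule mult_right_mono)
    finally have sq: "(a (l*Lb))\<^sup>2 \<le> \<tau> ^ 4 * S" .
    have "\<bar>a (l*Lb)\<bar> = sqrt ((a (l*Lb))\<^sup>2)" by simp
    also have "\<dots> \<le> sqrt (\<tau> ^ 4 * S)" using sq by (rule real_sqrt_le_mono)
    also have "\<tau> ^ 4 = (\<tau>\<^sup>2)\<^sup>2" by simp
    also have "sqrt ((\<tau>\<^sup>2)\<^sup>2 * S) = \<tau>\<^sup>2 * sqrt S" by (simp only: real_sqrt_mult real_sqrt_abs abs_power2)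
    finally show ?thesis .
  qed
  have sum1: "(\<Sum>l\<in>{j<..<M}. \<bar>a (l*Lb)\<bar>) \<le> \<tau> / 2 * sqrt S"
  proof -
    have "(\<Sum>l\<in>{j<..<M}. \<bar>a (l*Lb)\<bar>) \<le> real (card {j<..<M}) * (\<tau>\<^sup>2 * sqrt S)"
      using lead by (intro sum_bounded_above) auto
    also have "\<dots> \<le> real M * (\<tau>\<^sup>2 * sqrt S)"
      by (intro mult_right_mono) (auto simp: t0 S0)
    also have "\<dots> = (real M * \<tau>) * (\<tau> * sqrt S)" by (simp add: power2_eq_square)
    also have "\<dots> \<le> (1/2) * (\<tau> * sqrt S)" using Mt t0 S0 by (intro mult_right_mono) auto
    finally show ?thesis by simp
  qed
  define \<Delta> where "\<Delta> = (\<Sum>m\<in>{T..<R}. \<bar>a m\<bar>)"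
  have D0: "\<Delta> \<ge> 0" unfolding \<Delta>_def by (intro sum_nonneg) auto
  have "\<Delta>\<^sup>2 \<le> (\<Sum>m\<in>{T..<R}. (\<bar>a m\<bar>)\<^sup>2) * real (card {T..<R})"
    unfolding \<Delta>_def by (rule sum_squared_le_sum_of_squares)
  also have "\<dots> = s T * real (R - T)" by (simp add: s_def)
  also have "\<dots> \<le> s T * real R" using s0 by (intro mult_left_mono) auto
  also have "s T \<le> (1 - \<tau>\<^sup>2) ^ (T - j*Lb) * S"
    unfolding S_def using dk[of "j*Lb" "T - j*Lb"] jT by simp
  hence "s T * real R \<le> (1 - \<tau>\<^sup>2) ^ (T - j*Lb) * S * real R" by (intro mult_right_mono) auto
  also have "\<dots> = (real R * (1 - \<tau>\<^sup>2) ^ (T - j*Lb)) * S" by simp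
  also have "\<dots> \<le> \<tau> ^ 3 * S" using tailp[OF j] S0 by (rule mult_right_mono)
  also have "\<dots> \<le> (\<tau>\<^sup>2 / 16) * S"
  proof (rule mult_right_mono[OF _ S0])
    have "\<tau> ^ 3 = \<tau>\<^sup>2 * \<tau>" by (simp add: power3_eq_cube power2_eq_square)
    also have "\<dots> \<le> \<tau>\<^sup>2 * (1/16)" using t16 by (intro mult_left_mono) auto
    finally show "\<tau> ^ 3 \<le> \<tau>\<^sup>2 / 16" by simp
  qed
  finally have D2: "\<Delta>\<^sup>2 \<le> (\<tau>\<^sup>2 / 16) * S" .
  have "\<Delta> \<le> sqrt ((\<tau>\<^sup>2 / 16) * S)" using D2 by (rule real_le_rsqrt)
  also have "sqrt ((\<tau>\<^sup>2 / 16) * S) = \<tau> / 4 * sqrt S"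
  proof -
    have "(\<tau>\<^sup>2 / 16) = (\<tau> / 4)\<^sup>2" by (simp add: power2_eq_square)
    thus ?thesis using t0 by (simp add: real_sqrt_mult)
  qed
  finally have Db: "\<Delta> \<le> \<tau> / 4 * sqrt S" .
  have "\<bar>a (j*Lb)\<bar> > \<tau> * sqrt S" unfolding S_def s_def using bigc[OF jT] .
  thus ?thesis using sum1 Db unfolding \<Delta>_def[symmetric] by linarith
qed




lemma powexp:
  fixes x :: real
  assumes "0 \<le> x" "x \<le> 1"
  shows "(1 - x) ^ n \<le> exp (- (x * real n))"
proof -
  have "(1 - x) ^ n \<le> exp (- x) ^ n"
    using assms exp_ge_add_one_self[of "-x"] by (intro power_mono) auto
  also have "\<dots> = exp (real n * (- x))" by (rule exp_of_nat_mult[symmetric])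
  finally show ?thesis by (simp add: mult.commute)
qed

lemma exp_ln_pow:
  fixes k :: real
  assumes "k > 0"
  shows "exp (- (real n * ln k)) = 1 / k ^ n"
  using assms by (simp add: exp_minus exp_of_nat_mult inverse_eq_divide)

lemma numerics:
  fixes k R :: nat
  assumes k2: "k \<ge> 2" and R1: "R \<ge> 1"
  defines "\<tau> \<equiv> tau_k k" and "M \<equiv> nat \<lceil>4 * (real k)\<^sup>2 * ln (real k)\<rceil>"
    and "Lb \<equiv> nat \<lceil>(4 / (tau_k k)\<^sup>2) * ln (1 / tau_k k)\<rceil>" and "T \<equiv> nat \<lceil>t_param k R\<rceil>"
  shows "0 < \<tau>" "\<tau> \<le> 1/16" "0 < Lb" "real M * \<tau> \<le> 1/2" "(1 - \<tau>\<^sup>2) ^ Lb \<le> \<tau> ^ 4"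
    "\<And>j. j < M \<Longrightarrow> j * Lb < T"
    "\<And>j. j < M \<Longrightarrow> real R * (1 - \<tau>\<^sup>2) ^ (T - j * Lb) \<le> \<tau> ^ 3"
    "(1 - 1 / (2 * (real k)\<^sup>2)) ^ M \<le> 1 / (real k)\<^sup>2"
    "t_param k R \<ge> 0"
proof -
  have kpos: "real k > 0" using k2 by simp
  have k2r: "real k \<ge> 2" using k2 by simp
  have tau: "\<tau> = 1 / real k ^ 7" unfolding \<tau>_def tau_k_def by simp
  show tp: "0 < \<tau>" unfolding tau using kpos by simp
  have k7: "real k ^ 7 \<ge> 2 ^ 7" using k2r by (intro power_mono) auto
  show t16: "\<tau> \<le> 1/16" unfolding tau using k7 by (simp add: divide_simps)
  have lnk: "ln (real k) > 0" using k2r by simp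
  have lninv: "ln (1 / \<tau>) = 7 * ln (real k)" unfolding tau using kpos by (simp add: ln_realpow)
  have lnR: "ln (real R) \<ge> 0" using R1 by simp
  define A0 where "A0 = (1 / \<tau>\<^sup>2) * (3 * ln (1 / \<tau>) + ln (real R))"
  have A0: "A0 > 0" unfolding A0_def using tp lninv lnk lnR by (intro mult_pos_pos) auto
  have Lbx: "(4 / \<tau>\<^sup>2) * ln (1 / \<tau>) > 0" using tp lninv lnk by simp
  have Mx: "4 * (real k)\<^sup>2 * ln (real k) > 0" using kpos lnk by simp
  have tdef: "t_param k R = A0 + real M * real Lb"
    using Lbx Mx unfolding t_param_def A0_def M_def Lb_def \<tau>_def by simp
  show "t_param k R \<ge> 0" using tdef A0 by simp
  show Lb0: "0 < Lb" using Lbx unfolding Lb_def \<tau>_def by simp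
  have LbGe: "real Lb \<ge> (4 / \<tau>\<^sup>2) * ln (1 / \<tau>)" unfolding Lb_def \<tau>_def by (rule real_nat_ceiling_ge)
  have MGe: "real M \<ge> 4 * (real k)\<^sup>2 * ln (real k)" unfolding M_def by (rule real_nat_ceiling_ge)
  have TGe: "real T \<ge> t_param k R" unfolding T_def by (rule real_nat_ceiling_ge)
  have "real M \<le> 4 * (real k)\<^sup>2 * ln (real k) + 1" unfolding M_def using Mx by linarith
  also have "\<dots> \<le> 4 * (real k)\<^sup>2 * (real k - 1) + 1"
    using ln_le_minus_one[OF kpos] kpos by (intro add_right_mono mult_left_mono) auto
  also have "\<dots> \<le> 4 * real k ^ 3"
  proof -
    have "(real k)\<^sup>2 \<ge> 2\<^sup>2" using k2r by (intro power_mono) auto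
    hence "1 \<le> 4 * (real k)\<^sup>2" by simp
    thus ?thesis by (simp add: algebra_simps power2_eq_square power3_eq_cube)
  qed
  finally have Mle: "real M \<le> 4 * real k ^ 3" .
  have "real M * \<tau> \<le> 4 * real k ^ 3 * \<tau>" using Mle tp by (intro mult_right_mono) auto
  also have "\<dots> = 4 / real k ^ 4" unfolding tau using kpos by (simp add: field_simps)
  also have "\<dots> \<le> 1/2"
  proof -
    have "real k ^ 4 \<ge> 2 ^ 4" using k2r by (intro power_mono) auto
    thus ?thesis by (simp add: divide_simps)
  qed
  finally show "real M * \<tau> \<le> 1/2" .
  have tsq: "0 \<le> \<tau>\<^sup>2" "\<tau>\<^sup>2 \<le> 1" using tp t16 by (auto simp: power_le_one)
  have "(1 - \<tau>\<^sup>2) ^ Lb \<le> exp (- (\<tau>\<^sup>2 * real Lb))" using tsq by (rule powexp)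
  also have "\<dots> \<le> exp (- (real 28 * ln (real k)))"
  proof -
    have "\<tau>\<^sup>2 * real Lb \<ge> \<tau>\<^sup>2 * ((4 / \<tau>\<^sup>2) * ln (1 / \<tau>))" using LbGe tsq by (intro mult_left_mono) auto
    also have "\<tau>\<^sup>2 * ((4 / \<tau>\<^sup>2) * ln (1 / \<tau>)) = 28 * ln (real k)" using tp lninv by simp
    finally show ?thesis by simp
  qed
  also have "\<dots> = 1 / real k ^ 28" using kpos by (rule exp_ln_pow)
  also have "\<dots> = \<tau> ^ 4" unfolding tau by (simp add: power_divide flip: power_mult)
  finally show "(1 - \<tau>\<^sup>2) ^ Lb \<le> \<tau> ^ 4" .
  fix j assume j: "j < M"
  have jL: "real (j * Lb) \<le> real M * real Lb" using j by (simp add: mult_right_mono)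
  show "j * Lb < T" using jL tdef A0 TGe by linarith
  have "real (T - j * Lb) \<ge> A0"
  proof -
    have "j * Lb < T" using jL tdef A0 TGe by linarith
    hence "real (T - j * Lb) = real T - real (j * Lb)" by simp
    thus ?thesis using jL tdef TGe by linarith
  qed
  hence "\<tau>\<^sup>2 * real (T - j * Lb) \<ge> \<tau>\<^sup>2 * A0" using tsq by (intro mult_left_mono) auto
  moreover have "\<tau>\<^sup>2 * A0 = real 21 * ln (real k) + ln (real R)" unfolding A0_def using tp lninv by simp
  ultimately have ex: "\<tau>\<^sup>2 * real (T - j * Lb) \<ge> real 21 * ln (real k) + ln (real R)" by simp
  have "(1 - \<tau>\<^sup>2) ^ (T - j * Lb) \<le> exp (- (\<tau>\<^sup>2 * real (T - j * Lb)))" using tsq by (rule powexp)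
  also have "\<dots> \<le> exp (- (real 21 * ln (real k)) + - ln (real R))" using ex by simp
  also have "\<dots> = (1 / real k ^ 21) * (1 / real R)"
    unfolding exp_add exp_ln_pow[OF kpos] using R1 by (simp add: exp_minus inverse_eq_divide)
  finally have "real R * (1 - \<tau>\<^sup>2) ^ (T - j * Lb) \<le> real R * ((1 / real k ^ 21) * (1 / real R))"
    using R1 by (intro mult_left_mono) auto
  also have "\<dots> = \<tau> ^ 3" unfolding tau using R1 by (simp add: power_divide flip: power_mult)
  finally show "real R * (1 - \<tau>\<^sup>2) ^ (T - j * Lb) \<le> \<tau> ^ 3" .
next
  have kpos: "real k > 0" using k2 by simp
  have kk: "(real k)\<^sup>2 \<ge> 2\<^sup>2" using k2 by (intro power_mono) auto
  have q: "0 \<le> 1 / (2 * (real k)\<^sup>2)" "1 / (2 * (real k)\<^sup>2) \<le> 1" using kpos kk by (auto simp: field_simps)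
  have MGe: "real M \<ge> 4 * (real k)\<^sup>2 * ln (real k)" unfolding M_def by (rule real_nat_ceiling_ge)
  have "(1 - 1 / (2 * (real k)\<^sup>2)) ^ M \<le> exp (- (1 / (2 * (real k)\<^sup>2) * real M))" using q by (rule powexp)
  also have "\<dots> \<le> exp (- (real 2 * ln (real k)))"
  proof -
    have "1 / (2 * (real k)\<^sup>2) * real M \<ge> 1 / (2 * (real k)\<^sup>2) * (4 * (real k)\<^sup>2 * ln (real k))"
      using MGe q by (intro mult_left_mono) auto
    also have "1 / (2 * (real k)\<^sup>2) * (4 * (real k)\<^sup>2 * ln (real k)) = 2 * ln (real k)" using kpos by simp
    finally show ?thesis by simp
  qed
  also have "\<dots> = 1 / real k ^ 2" using kpos by (rule exp_ln_pow)
  finally show "(1 - 1 / (2 * (real k)\<^sup>2)) ^ M \<le> 1 / (real k)\<^sup>2" .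
qed




theorem lemma4p8:
  fixes k R r :: nat and D0 D1 :: "(nat \<Rightarrow> bool) pmf"
    and w :: "nat \<Rightarrow> nat \<Rightarrow> real" and \<theta> :: real and b :: bool
  assumes "k \<ge> 2" and "R \<ge> 1"
    and "set_pmf D0 \<subseteq> {x. \<forall>i\<ge>k. \<not> x i}"
    and "set_pmf D1 \<subseteq> {x. \<forall>i\<ge>k. \<not> x i}"
    and "r < k"
    and "real (card (Cset (tau_k k) R (w r))) > t_param k R"
  shows "\<bar>measure_pmf.expectation (noisyD k R (if b then D1 else D0))
            (halfspace k R (w(r := truncate (w r) (Bset (nat \<lceil>t_param k R\<rceil>) R (w r)))) \<theta>)
          - measure_pmf.expectation (noisyD k R (if b then D1 else D0)) (halfspace k R w \<theta>)\<bar>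
         \<le> 1 / (real k)\<^sup>2"
proof -
  define D where "D = (if b then D1 else D0)"
  define \<tau> where "\<tau> = tau_k k"
  define M where "M = nat \<lceil>4 * (real k)\<^sup>2 * ln (real k)\<rceil>"
  define Lb where "Lb = nat \<lceil>(4 / (tau_k k)\<^sup>2) * ln (1 / tau_k k)\<rceil>"
  define T where "T = nat \<lceil>t_param k R\<rceil>"
  define ord where "ord = idx_order R (w r)"
  define w' where "w' = w(r := truncate (w r) (Bset T R (w r)))"
  note num = numerics[OF assms(1,2), folded T_def Lb_def M_def \<tau>_def]
  have dist: "distinct ord" and so: "set ord = {..<R}" and len: "length ord = R"
    by (auto simp: ord_def idx_order_def)
  have cf: "T \<le> R \<and> (\<forall>m<T. \<bar>w r (ord ! m)\<bar> > \<tau> * sqrt (\<Sum>j\<in>{m..<R}. (w r (ord ! j))\<^sup>2))"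
    unfolding T_def ord_def \<tau>_def by (rule crit_facts[OF assms(6) num(9)])
  hence TR: "T \<le> R" and bigc: "\<And>m. m < T \<Longrightarrow> \<bar>w r (ord ! m)\<bar> > \<tau> * sqrt (\<Sum>j\<in>{m..<R}. (w r (ord ! j))\<^sup>2)"
    by auto
  have big: "(\<Sum>l\<in>{j<..<M}. \<bar>w r (ord!(l*Lb))\<bar>) + 2 * (\<Sum>m\<in>{T..<R}. \<bar>w r (ord!m)\<bar>) < \<bar>w r (ord!(j*Lb))\<bar>"
    if j: "j < M" for j
    using analytic[where a = "\<lambda>m. w r (ord ! m)", OF bigc TR num(1) num(2) num(4) num(5) num(6) num(7) j]
    by simp
  have Bs: "Bset T R (w r) = set (take T ord)" by (simp add: Bset_def ord_def)
  define L where "L = (\<lambda>j. (r, ord!(j*Lb))) ` {..<M}"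
  have injL: "inj_on (\<lambda>j. (r, ord!(j*Lb))) {..<M}"
  proof (rule inj_onI)
    fix x y assume x: "x \<in> {..<M}" and y: "y \<in> {..<M}" and e: "(r, ord!(x*Lb)) = (r, ord!(y*Lb))"
    have "x * Lb < R" "y * Lb < R" using num(6) x y TR by (auto dest: order.strict_trans2)
    hence "x * Lb = y * Lb" using e dist len by (simp add: nth_eq_iff_index_eq)
    thus "x = y" using num(3) by simp
  qed
  have cardL: "card L = M" unfolding L_def using injL by (simp add: card_image)
  have LI: "L \<subseteq> {..<k} \<times> {..<R}"
  proof
    fix x assume "x \<in> L"
    then obtain j where j: "j < M" and x: "x = (r, ord!(j*Lb))" unfolding L_def by blast
    have "j * Lb < R" using num(6)[OF j] TR by simp
    hence "ord!(j*Lb) \<in> set ord" using len by (intro nth_mem) simp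
    hence "ord!(j*Lb) < R" using so by blast
    thus "x \<in> {..<k} \<times> {..<R}" using x assms(5) by simp
  qed
  define c where "c = 1 - 1 / (2 * (real k)\<^sup>2)"
  have kk: "(real k)\<^sup>2 \<ge> 2\<^sup>2" using assms(1) by (intro power_mono) auto
  have c0: "c \<ge> 0"
  proof -
    have "1 / (2 * (real k)\<^sup>2) \<le> 1" using kk by (simp add: divide_le_eq)
    thus ?thesis unfolding c_def by simp
  qed
  have "\<bar>measure_pmf.expectation (noisyD k R D) (halfspace k R w' \<theta>)
          - measure_pmf.expectation (noisyD k R D) (halfspace k R w \<theta>)\<bar>
        \<le> measure (noisyD k R D) {y. halfspace k R w' \<theta> y \<noteq> halfspace k R w \<theta> y}"
    by (rule exp_diff_bound) (auto simp: halfspace_def sgn01_def)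
  also have "\<dots> \<le> c ^ M"
    unfolding noisyD_def
  proof (rule bind_bound)
    fix X :: "nat \<Rightarrow> nat \<Rightarrow> bool"
    let ?P = "(\<lambda>(i,j). noise_bit k (X j i)) :: nat \<times> nat \<Rightarrow> bool pmf"
    let ?E = "(\<lambda>Y i j. Y (i,j)) -` {y. halfspace k R w' \<theta> y \<noteq> halfspace k R w \<theta> y}"
    have eq: "bind_pmf (Pi_pmf ({..<k} \<times> {..<R}) False ?P) (\<lambda>Y. return_pmf (\<lambda>i j. Y (i, j)))
        = map_pmf (\<lambda>Y i j. Y (i,j)) (Pi_pmf ({..<k} \<times> {..<R}) False ?P)"
      by (simp add: map_pmf_def)
    have "measure (Pi_pmf ({..<k} \<times> {..<R}) False ?P) ?E \<le> c ^ card L"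
    proof (rule unique_measure_bound[OF _ LI c0])
      show "finite ({..<k} \<times> {..<R})" by simp
      show "pmf (?P l) v \<le> c" if "l \<in> L" for l v
        unfolding c_def using noise_bit_pmf[of k] assms(1) by (cases l) auto
      show "\<forall>i\<in>L. Y1 i = Y2 i" if "Y1 \<in> ?E" "Y2 \<in> ?E" "\<forall>i. i \<notin> L \<longrightarrow> Y1 i = Y2 i" for Y1 Y2
        unfolding L_def
      proof (rule uniq_core[where w=w and r=r and k=k and ord=ord and R=R and T=T and Lb=Lb and M=M, OF assms(5) dist so len TR num(3) num(6) big])
        show "halfspace k R (w(r := truncate (w r) (set (take T ord)))) \<theta> (\<lambda>i j. Y1 (i,j)) \<noteq> halfspace k R w \<theta> (\<lambda>i j. Y1 (i,j))"
          using that(1) by (simp add: w'_def Bs)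
        show "halfspace k R (w(r := truncate (w r) (set (take T ord)))) \<theta> (\<lambda>i j. Y2 (i,j)) \<noteq> halfspace k R w \<theta> (\<lambda>i j. Y2 (i,j))"
          using that(2) by (simp add: w'_def Bs)
        show "\<forall>i. i \<notin> (\<lambda>j. (r, ord!(j*Lb))) ` {..<M} \<longrightarrow> Y1 i = Y2 i" using that(3) unfolding L_def .
      qed
    qed
    thus "measure (bind_pmf (Pi_pmf ({..<k} \<times> {..<R}) False ?P) (\<lambda>Y. return_pmf (\<lambda>i j. Y (i, j))))
            {y. halfspace k R w' \<theta> y \<noteq> halfspace k R w \<theta> y} \<le> c ^ M"
      unfolding eq cardL by simp
  qed (use c0 in simp)
  also have "\<dots> \<le> 1 / (real k)\<^sup>2" unfolding c_def by (rule num(8))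
  finally show ?thesis unfolding D_def w'_def T_def .
qed


end
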